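(* Let $\mathbf{W}=\langle W;\to,\neg,{}^{+},{}^{-},1\rangle$ be a quasi-Wajsberg* algebra and $0:=1\to 1$. Then: (1) $0\to 1=1$ and $0\to\neg 1=\neg 1$; (2) $1\to 0=\neg 1$ and $\neg 1\to 0=1$; (3) $\neg 1\to 1=1$ and $1\to\neg 1=\neg 1$; (4) $0^{+}=0=0^{-}$, $1^{+}=1$, $(\neg 1)^{-}=\neg 1$; (5) $1^{-}=0=(\neg 1)^{+}$.
   Context: A quasi-Wajsberg* algebra is an algebra $\langle W;\to,\neg,{}^{+},{}^{-},1\rangle$ of type $\langle2,1,1,1,0\rangle$ such that for all $x,y,z\in W$: (QW*1) $x\to y=\neg y\to\neg x$; (QW*2) $(x\to 1)\to((y\to 1)\to z)=(y\to 1)\to((x\to 1)\to z)$; (QW*3) $(1\to x)\to 1=1$; (QW*4) $(z\to z)\to(x\to y)=x\to y$; (QW*5) $(1\to 1)\to x^{+}=((1\to 1)\to x)^{+}=(x\to 1)\to 1$ and $(1\to 1)\to x^{-}=((1\to 1)\to x)^{-}=(x\to\neg 1)\to\neg 1$; (QW*6) $x\to y=(y^{+}\to x^{-})\to(x^{+}\to y^{-})$; (QW*7) $\neg(x\to y)=y\to x$; (QW*8) $\neg\neg x=x$; (QW*9) $(x\to(\neg x\to y))^{+}=x^{+}\to(\neg x^{+}\to y^{+})$; (QW*10) $x\vee y=y\vee x$; (QW*11) $x\vee(y\vee z)=(x\vee y)\vee z$; (QW*12) $x\to(y\vee z)=(x\to y)\vee(x\to z)$; where $x\vee y:=((x^{+}\to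 y^{+})^{+}\to(\neg x)^{-})\to((y^{-}\to x^{-})^{-}\to x^{-})$. Conventions: ${}^+,{}^-$ bind tighter than $\neg$, which binds tighter than $\to$. *)

theory Defs
  imports Main
begin

text \<open>Quasi-Wajsberg* algebras. The carrier W is the whole type 'a;
  imp = implication, neg = negation, pl = the unary operation (.)^+,
  mi = the unary operation (.)^-, one = the constant 1.\<close>

definition qw_join ::
  "('a \<Rightarrow> 'a \<Rightarrow> 'a) \<Rightarrow> ('a \<Rightarrow> 'a) \<Rightarrow> ('a \<Rightarrow> 'a) \<Rightarrow> ('a \<Rightarrow> 'a) \<Rightarrow> 'a \<Rightarrow> 'a \<Rightarrow> 'a"
  where
  "qw_join imp neg pl mi x y =
     imp (imp (pl (imp (pl x) (pl y))) (mi (neg x)))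
         (imp (mi (imp (mi y) (mi x))) (mi x))"

definition quasi_wajsberg_star ::
  "('a \<Rightarrow> 'a \<Rightarrow> 'a) \<Rightarrow> ('a \<Rightarrow> 'a) \<Rightarrow> ('a \<Rightarrow> 'a) \<Rightarrow> ('a \<Rightarrow> 'a) \<Rightarrow> 'a \<Rightarrow> bool"
  where
  "quasi_wajsberg_star imp neg pl mi one \<longleftrightarrow>
    (\<forall>x y. imp x y = imp (neg y) (neg x)) \<and>
    (\<forall>x y z. imp (imp x one) (imp (imp y one) z) = imp (imp y one) (imp (imp x one) z)) \<and>
    (\<forall>x. imp (imp one x) one = one) \<and>
    (\<forall>x y z. imp (imp z z) (imp x y) = imp x y) \<and>
    (\<forall>x. imp (imp one one) (pl x) = pl (imp (imp one one) x) \<and>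
         pl (imp (imp one one) x) = imp (imp x one) one) \<and>
    (\<forall>x. imp (imp one one) (mi x) = mi (imp (imp one one) x) \<and>
         mi (imp (imp one one) x) = imp (imp x (neg one)) (neg one)) \<and>
    (\<forall>x y. imp x y = imp (imp (pl y) (mi x)) (imp (pl x) (mi y))) \<and>
    (\<forall>x y. neg (imp x y) = imp y x) \<and>
    (\<forall>x. neg (neg x) = x) \<and>
    (\<forall>x y. pl (imp x (imp (neg x) y)) = imp (pl x) (imp (neg (pl x)) (pl y))) \<and>
    (\<forall>x y. qw_join imp neg pl mi x y = qw_join imp neg pl mi y x) \<and>
    (\<forall>x y z. qw_join imp neg pl mi x (qw_join imp neg pl mi y z) =
             qw_join imp neg pl mi (qw_join imp neg pl mi x y) z) \<and>
    (\<forall>x y z. imp x (qw_join imp neg pl mi y z) =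
             qw_join imp neg pl mi (imp x y) (imp x z))"

end

theory Submission
  imports Defs
begin

theorem proposition3p2:
  fixes imp :: "'a \<Rightarrow> 'a \<Rightarrow> 'a" and neg pl mi :: "'a \<Rightarrow> 'a" and one :: 'a
  assumes "quasi_wajsberg_star imp neg pl mi one"
  defines "zero \<equiv> imp one one"
  shows "(imp zero one = one \<and> imp zero (neg one) = neg one) \<and>
         (imp one zero = neg one \<and> imp (neg one) zero = one) \<and>
         (imp (neg one) one = one \<and> imp one (neg one) = neg one) \<and>
         (pl zero = zero \<and> zero = mi zero \<and> pl one = one \<and> mi (neg one) = neg one) \<and>
         (mi one = zero \<and> zero = pl (neg one))"
proof -
  note A = assms(1)[unfolded quasi_wajsberg_star_def]
  have Q1: "\<And>x y. imp x y = imp (neg y) (neg x)" using A by meson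
  have Q3: "\<And>x. imp (imp one x) one = one" using A by meson
  have Q4: "\<And>x y z. imp (imp z z) (imp x y) = imp x y" using A by meson
  have Q5p: "\<And>x. imp zero (pl x) = pl (imp zero x) \<and> pl (imp zero x) = imp (imp x one) one"
    using A unfolding zero_def by meson
  have Q5m: "\<And>x. imp zero (mi x) = mi (imp zero x) \<and> mi (imp zero x) = imp (imp x (neg one)) (neg one)"
    using A unfolding zero_def by meson
  have Q7: "\<And>x y. neg (imp x y) = imp y x" using A by meson
  have Q8: "\<And>x. neg (neg x) = x" using A by meson
  have a1: "imp zero one = one" using Q3[of one] unfolding zero_def .
  have n1: "neg one = imp one zero" using Q7[of zero one] a1 by (simp add: zero_def[symmetric])
  have a2: "imp zero (neg one) = neg one" using n1 Q4[of one one zero] unfolding zero_def by (simp add: zero_def[symmetric])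
  have b2: "imp (neg one) zero = one" using Q7[of zero "neg one"] a2 Q8 by (simp add: zero_def[symmetric])
  have c1: "imp (neg one) one = one" using n1 Q3[of zero] by (simp add: zero_def[symmetric])
  have c2: "imp one (neg one) = neg one" using Q7[of "neg one" one] c1 by (simp add: zero_def[symmetric])
  have zz: "imp zero zero = zero" using Q4[of one one one] unfolding zero_def .
  have nn: "imp (neg one) (neg one) = zero" using Q1[of one one] unfolding zero_def by (simp add: zero_def[symmetric])
  have d1: "pl one = one" using Q5p[of one] a1 by (simp add: zero_def[symmetric])
  have d0: "pl zero = zero" using Q5p[of zero] zz a1 unfolding zero_def by (simp add: zero_def[symmetric])
  have e0: "mi zero = zero" using Q5m[of zero] zz a2 nn by (simp add: zero_def[symmetric])
  have e1: "mi (neg one) = neg one" using Q5m[of "neg one"] a2 nn by (simp add: zero_def[symmetric])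
  have f1: "mi one = zero" using Q5m[of one] a1 c2 nn by (simp add: zero_def[symmetric])
  have f2: "pl (neg one) = zero" using Q5p[of "neg one"] a2 c1 unfolding zero_def by (simp add: zero_def[symmetric])
  show ?thesis using a1 a2 n1 b2 c1 c2 d1 d0 e0 e1 f1 f2 by (simp add: zero_def[symmetric])
qed

end
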